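(* Suppose ambiguous communication benefits the sender, i.e. $V_{\mathrm{amb}} > V_{\mathrm{stat}}$. Then there exists a canonical ambiguous experiment $\Sigma$ such that $\tau^{*} \in BR(\Sigma)$ but $\tau^{*} \notin BR(\sigma)$ for every $\sigma \in \Sigma$.
   Context: Setting: $\Omega$ is a finite set of states, $A$ a finite set of receiver actions. Sender and receiver share a set of priors $P \subseteq \Delta(\Omega)$, nonempty, closed and convex; both have maxmin expected utility preferences. Payoffs are $u_s, u_r : A \times \Omega \to \mathbb{R}$. A statistical experiment with finite message set $M$ is a map $\sigma: \Omega \to \Delta(M)$, written $\sigma(m\mid\omega)$. A receiver strategy is $\tau: M \to \Delta(A)$, written $\tau(a\mid m)$. For $p \in P$ and $i \in \{s,r\}$, $u_i(p,\sigma,\tau) = \sum_{\omega,m,a} p(\omega)\sigma(m\mid\omega)\tau(a\mid m)u_i(a,\omega)$ and $u_i(\sigma,\tau) = \min_{p\in P} u_i(p,\sigma,\tau)$. An ambiguous experiment is a nonempty closed convex set $\Sigma$ of statistical experiments with a common finite message set $M$; $U_i(\Sigma,\tau) = \min_{\sigma \in \Sigma} u_i(\sigma,\tau)$. Best responses: $BR(\sigma) = \arg\max_{\tau} u_r(\sigma,\tau)$ and $BR(\Sigma) = \arg\max_{\tau} U_r(\Sigma,\tau)$, maximizing over all strategies $\tau: M \to \Delta(A)$. An experiment is canonical if its message set is $M = A$. The obedient strategy $\tau^{*}: A \to \Delta(A)$ is $\tau^{*}(a\mid a) = 1$ for all $a \in A$. The sender's value with statistical experiments is $V_{\mathrm{stat}}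 = \sup\{u_s(\sigma,\tau) : M \text{ finite}, \sigma:\Omega\to\Delta(M), \tau \in BR(\sigma)\}$, and with ambiguous experiments is $V_{\mathrm{amb}} = \sup\{U_s(\Sigma,\tau) : M \text{ finite}, \Sigma \text{ ambiguous experiment with message set } M, \tau \in BR(\Sigma)\}$ (the sender selects both the experiment and the receiver's best response). Ambiguous communication benefits the sender if $V_{\mathrm{amb}} > V_{\mathrm{stat}}$. *)

theory Defs
  imports "HOL-Analysis.Analysis"
begin

definition dist_on :: "'x set \<Rightarrow> ('x \<Rightarrow> real) \<Rightarrow> bool" where
  "dist_on S f \<longleftrightarrow> (\<forall>x\<in>S. 0 \<le> f x) \<and> (\<forall>x. x \<notin> S \<longrightarrow> f x = 0) \<and> sum f S = 1"

definition convex_set1 :: "('x \<Rightarrow> real) set \<Rightarrow> bool" where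
  "convex_set1 S \<longleftrightarrow> (\<forall>x\<in>S. \<forall>y\<in>S. \<forall>t::real. 0 \<le> t \<and> t \<le> 1 \<longrightarrow>
      (\<lambda>w. t * x w + (1 - t) * y w) \<in> S)"

definition convex_set2 :: "('x \<Rightarrow> 'y \<Rightarrow> real) set \<Rightarrow> bool" where
  "convex_set2 S \<longleftrightarrow> (\<forall>x\<in>S. \<forall>y\<in>S. \<forall>t::real. 0 \<le> t \<and> t \<le> 1 \<longrightarrow>
      (\<lambda>w m. t * x w m + (1 - t) * y w m) \<in> S)"

definition priors_ok :: "('w::finite \<Rightarrow> real) set \<Rightarrow> bool" where
  "priors_ok P \<longleftrightarrow> P \<noteq> {} \<and> closed P \<and> convex_set1 P \<and> (\<forall>p\<in>P. dist_on UNIV p)"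

(* statistical experiment sigma : Omega -> Delta(M), sigma w m = sigma(m|w) *)
definition stat_experiment :: "'m set \<Rightarrow> ('w \<Rightarrow> 'm \<Rightarrow> real) \<Rightarrow> bool" where
  "stat_experiment M \<sigma> \<longleftrightarrow> finite M \<and> (\<forall>w. dist_on M (\<sigma> w))"

(* receiver strategy tau : M -> Delta(A), tau m a = tau(a|m) *)
definition strategy :: "'m set \<Rightarrow> ('m \<Rightarrow> 'a::finite \<Rightarrow> real) \<Rightarrow> bool" where
  "strategy M \<tau> \<longleftrightarrow> (\<forall>m\<in>M. dist_on UNIV (\<tau> m))"

definition eu :: "('a::finite \<Rightarrow> 'w::finite \<Rightarrow> real) \<Rightarrow> 'm set \<Rightarrow> ('w \<Rightarrow> real)
                  \<Rightarrow> ('w \<Rightarrow> 'm \<Rightarrow> real) \<Rightarrow> ('m \<Rightarrow> 'a \<Rightarrow> real) \<Rightarrow> real" where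
  "eu u M p \<sigma> \<tau> = (\<Sum>w\<in>UNIV. \<Sum>m\<in>M. \<Sum>a\<in>UNIV. p w * \<sigma> w m * \<tau> m a * u a w)"

definition uval :: "('w::finite \<Rightarrow> real) set \<Rightarrow> ('a::finite \<Rightarrow> 'w \<Rightarrow> real) \<Rightarrow> 'm set
                    \<Rightarrow> ('w \<Rightarrow> 'm \<Rightarrow> real) \<Rightarrow> ('m \<Rightarrow> 'a \<Rightarrow> real) \<Rightarrow> real" where
  "uval P u M \<sigma> \<tau> = (INF p\<in>P. eu u M p \<sigma> \<tau>)"

definition Uval :: "('w::finite \<Rightarrow> real) set \<Rightarrow> ('a::finite \<Rightarrow> 'w \<Rightarrow> real) \<Rightarrow> 'm set
                    \<Rightarrow> ('w \<Rightarrow> 'm \<Rightarrow> real) set \<Rightarrow> ('m \<Rightarrow> 'a \<Rightarrow> real) \<Rightarrow> real" where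
  "Uval P u M \<Sigma> \<tau> = (INF \<sigma>\<in>\<Sigma>. uval P u M \<sigma> \<tau>)"

definition amb_experiment :: "'m set \<Rightarrow> ('w \<Rightarrow> 'm \<Rightarrow> real) set \<Rightarrow> bool" where
  "amb_experiment M \<Sigma> \<longleftrightarrow> \<Sigma> \<noteq> {} \<and> closed \<Sigma> \<and> convex_set2 \<Sigma> \<and> (\<forall>\<sigma>\<in>\<Sigma>. stat_experiment M \<sigma>)"

definition BR_stat :: "('w::finite \<Rightarrow> real) set \<Rightarrow> ('a::finite \<Rightarrow> 'w \<Rightarrow> real) \<Rightarrow> 'm set
                    \<Rightarrow> ('w \<Rightarrow> 'm \<Rightarrow> real) \<Rightarrow> ('m \<Rightarrow> 'a \<Rightarrow> real) set" where
  "BR_stat P ur M \<sigma> = {\<tau>. strategy M \<tau> \<and>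
      (\<forall>\<tau>'. strategy M \<tau>' \<longrightarrow> uval P ur M \<sigma> \<tau>' \<le> uval P ur M \<sigma> \<tau>)}"

definition BR_amb :: "('w::finite \<Rightarrow> real) set \<Rightarrow> ('a::finite \<Rightarrow> 'w \<Rightarrow> real) \<Rightarrow> 'm set
                    \<Rightarrow> ('w \<Rightarrow> 'm \<Rightarrow> real) set \<Rightarrow> ('m \<Rightarrow> 'a \<Rightarrow> real) set" where
  "BR_amb P ur M \<Sigma> = {\<tau>. strategy M \<tau> \<and>
      (\<forall>\<tau>'. strategy M \<tau>' \<longrightarrow> Uval P ur M \<Sigma> \<tau>' \<le> Uval P ur M \<Sigma> \<tau>)}"

(* Sender values; finite message sets are represented as finite sets of naturals
   (every finite set is in bijection with one). *)
definition V_stat :: "('w::finite \<Rightarrow> real) set \<Rightarrow> ('a::finite \<Rightarrow> 'w \<Rightarrow> real)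
                      \<Rightarrow> ('a \<Rightarrow> 'w \<Rightarrow> real) \<Rightarrow> real" where
  "V_stat P us ur = Sup {uval P us M \<sigma> \<tau> | (M::nat set) \<sigma> \<tau>.
      finite M \<and> stat_experiment M \<sigma> \<and> \<tau> \<in> BR_stat P ur M \<sigma>}"

definition V_amb :: "('w::finite \<Rightarrow> real) set \<Rightarrow> ('a::finite \<Rightarrow> 'w \<Rightarrow> real)
                      \<Rightarrow> ('a \<Rightarrow> 'w \<Rightarrow> real) \<Rightarrow> real" where
  "V_amb P us ur = Sup {Uval P us M \<Sigma> \<tau> | (M::nat set) \<Sigma> \<tau>.
      finite M \<and> amb_experiment M \<Sigma> \<and> \<tau> \<in> BR_amb P ur M \<Sigma>}"

(* obedient strategy for canonical experiments (M = A) *)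
definition obedient :: "'a \<Rightarrow> 'a \<Rightarrow> real" where
  "obedient a b = (if b = a then 1 else 0)"

end

theory Submission
  imports Defs "HOL-Analysis.Analysis"
begin



definition garb :: "'m set \<Rightarrow> ('m \<Rightarrow> 'a \<Rightarrow> real) \<Rightarrow> ('w \<Rightarrow> 'm \<Rightarrow> real) \<Rightarrow> 'w \<Rightarrow> 'a \<Rightarrow> real" where
  "garb M \<tau> \<sigma> = (\<lambda>w a. \<Sum>m\<in>M. \<sigma> w m * \<tau> m a)"

definition cmpz :: "('m \<Rightarrow> 'a::finite \<Rightarrow> real) \<Rightarrow> ('a \<Rightarrow> 'b \<Rightarrow> real) \<Rightarrow> 'm \<Rightarrow> 'b \<Rightarrow> real" where
  "cmpz \<tau> \<tau>' = (\<lambda>m b. \<Sum>a\<in>UNIV. \<tau> m a * \<tau>' a b)"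

lemma eu_garb:
  "eu u (UNIV::'a::finite set) p (garb M \<tau> \<sigma>) \<tau>' = eu u M p \<sigma> (cmpz \<tau> \<tau>')"
proof -
  have "eu u (UNIV::'a set) p (garb M \<tau> \<sigma>) \<tau>' =
     (\<Sum>w\<in>UNIV. \<Sum>a\<in>UNIV. \<Sum>b\<in>UNIV. \<Sum>m\<in>M. p w * \<sigma> w m * \<tau> m a * \<tau>' a b * u b w)"
    unfolding eu_def garb_def
    by (simp add: sum_distrib_left sum_distrib_right mult_ac)
  also have "\<dots> = (\<Sum>w\<in>UNIV. \<Sum>m\<in>M. \<Sum>b\<in>UNIV. \<Sum>a\<in>UNIV. p w * \<sigma> w m * \<tau> m a * \<tau>' a b * u b w)"
  proof (rule sum.cong[OF refl])
    fix w
    let ?F = "\<lambda>a b m. p w * \<sigma> w m * \<tau> m a * \<tau>' a b * u b w"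
    have "(\<Sum>a\<in>UNIV. \<Sum>b\<in>UNIV. \<Sum>m\<in>M. ?F a b m) = (\<Sum>a\<in>UNIV. \<Sum>m\<in>M. \<Sum>b\<in>UNIV. ?F a b m)"
      by (rule sum.cong[OF refl], rule sum.swap)
    also have "\<dots> = (\<Sum>m\<in>M. \<Sum>a\<in>UNIV. \<Sum>b\<in>UNIV. ?F a b m)" by (rule sum.swap)
    also have "\<dots> = (\<Sum>m\<in>M. \<Sum>b\<in>UNIV. \<Sum>a\<in>UNIV. ?F a b m)"
      by (rule sum.cong[OF refl], rule sum.swap)
    finally show "(\<Sum>a\<in>UNIV. \<Sum>b\<in>UNIV. \<Sum>m\<in>M. ?F a b m) = (\<Sum>m\<in>M. \<Sum>b\<in>UNIV. \<Sum>a\<in>UNIV. ?F a b m)" .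
  qed
  also have "\<dots> = eu u M p \<sigma> (cmpz \<tau> \<tau>')"
    unfolding eu_def cmpz_def
    by (simp add: sum_distrib_left sum_distrib_right mult_ac)
  finally show ?thesis .
qed

lemma cmpz_obedient: "cmpz \<tau> obedient = \<tau>"
  unfolding cmpz_def obedient_def by (auto simp: fun_eq_iff if_distrib cong: if_cong)

lemma "compact {\<sigma>::'w::finite \<Rightarrow> nat \<Rightarrow> real. \<forall>w m. \<sigma> w m \<in> {0..1}}"
proof -
  have c1: "compact (Pi\<^sub>E (UNIV::nat set) (\<lambda>m. {0..1::real}))"
    using compactin_PiE[of "\<lambda>i. euclidean" UNIV "\<lambda>m. {0..1::real}"]
    by (simp add: euclidean_product_topology)
  have c2: "compact (Pi\<^sub>E (UNIV::'w set) (\<lambda>w. Pi\<^sub>E (UNIV::nat set) (\<lambda>m. {0..1::real})))"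
    using compactin_PiE[of "\<lambda>i. euclidean" UNIV "\<lambda>w. Pi\<^sub>E (UNIV::nat set) (\<lambda>m. {0..1::real})"] c1
    by (simp add: euclidean_product_topology)
  have "{\<sigma>::'w::finite \<Rightarrow> nat \<Rightarrow> real. \<forall>w m. \<sigma> w m \<in> {0..1}} = Pi\<^sub>E (UNIV::'w set) (\<lambda>w. Pi\<^sub>E (UNIV::nat set) (\<lambda>m. {0..1::real}))"
    by (auto simp: PiE_iff)
  with c2 show ?thesis by simp
qed




lemma dist_le1: assumes "dist_on S f" "finite S" shows "f x \<le> 1"
proof (cases "x \<in> S")
  case True
  have "f x \<le> sum f S" using assms True by (intro member_le_sum) (auto simp: dist_on_def)
  then show ?thesis using assms by (simp add: dist_on_def)
next
  case False then show ?thesis using assms by (simp add: dist_on_def)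
qed

lemma dist_ge0: assumes "dist_on S f" shows "f x \<ge> 0"
  using assms by (cases "x \<in> S") (auto simp: dist_on_def)

definition K :: "('a::finite \<Rightarrow> 'w::finite \<Rightarrow> real) \<Rightarrow> real" where
  "K u = (\<Sum>w\<in>UNIV. \<Sum>a\<in>UNIV. \<bar>u a w\<bar>)"

lemma eu_bound:
  assumes p: "dist_on UNIV p" and s: "stat_experiment M \<sigma>" and t: "strategy M \<tau>"
  shows "\<bar>eu u M p \<sigma> \<tau>\<bar> \<le> K u"
proof -
  have fM: "finite M" using s by (simp add: stat_experiment_def)
  have sd: "\<And>w. dist_on M (\<sigma> w)" using s by (simp add: stat_experiment_def)
  have td: "\<And>m. m \<in> M \<Longrightarrow> dist_on UNIV (\<tau> m)" using t by (simp add: strategy_def)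
  have "\<bar>eu u M p \<sigma> \<tau>\<bar> \<le> (\<Sum>w\<in>UNIV. \<Sum>m\<in>M. \<Sum>a\<in>UNIV. \<bar>p w * \<sigma> w m * \<tau> m a * u a w\<bar>)"
    unfolding eu_def by (rule order_trans[OF sum_abs], rule sum_mono, rule order_trans[OF sum_abs],
       rule sum_mono, rule sum_abs)
  also have "\<dots> \<le> (\<Sum>w\<in>UNIV. \<Sum>m\<in>M. \<Sum>a\<in>UNIV. p w * \<sigma> w m * \<bar>u a w\<bar>)"
  proof (intro sum_mono)
    fix w m a assume m: "m \<in> M"
    have "0 \<le> p w" "0 \<le> \<sigma> w m" "0 \<le> \<tau> m a" "\<tau> m a \<le> 1"
      using dist_ge0[OF p] dist_ge0[OF sd] dist_ge0[OF td[OF m]] dist_le1[OF td[OF m]] by auto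
    then show "\<bar>p w * \<sigma> w m * \<tau> m a * u a w\<bar> \<le> p w * \<sigma> w m * \<bar>u a w\<bar>"
    proof -
      have "p w * \<sigma> w m * \<bar>u a w\<bar> * \<tau> m a \<le> p w * \<sigma> w m * \<bar>u a w\<bar>"
        by (rule mult_right_le_one_le) (use \<open>0 \<le> p w\<close> \<open>0 \<le> \<sigma> w m\<close> \<open>0 \<le> \<tau> m a\<close> \<open>\<tau> m a \<le> 1\<close> in auto)
      then show ?thesis using \<open>0 \<le> p w\<close> \<open>0 \<le> \<sigma> w m\<close> \<open>0 \<le> \<tau> m a\<close>
        by (simp add: abs_mult mult_ac)
    qed
  qed
  also have "\<dots> = (\<Sum>w\<in>UNIV. p w * (\<Sum>m\<in>M. \<sigma> w m) * (\<Sum>a\<in>UNIV. \<bar>u a w\<bar>))"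
    by (simp add: sum_distrib_left sum_distrib_right mult_ac)
  also have "\<dots> = (\<Sum>w\<in>UNIV. p w * (\<Sum>a\<in>UNIV. \<bar>u a w\<bar>))"
    using sd by (simp add: dist_on_def)
  also have "\<dots> \<le> (\<Sum>w\<in>UNIV. (\<Sum>a\<in>UNIV. \<bar>u a w\<bar>))"
  proof (intro sum_mono)
    fix w
    have "p w \<le> 1" using dist_le1[OF p] by simp
    then show "p w * (\<Sum>a\<in>UNIV. \<bar>u a w\<bar>) \<le> (\<Sum>a\<in>UNIV. \<bar>u a w\<bar>)"
      using mult_right_mono[OF \<open>p w \<le> 1\<close>, of "\<Sum>a\<in>UNIV. \<bar>u a w\<bar>"] by (simp add: sum_nonneg)
  qed
  finally show ?thesis by (simp add: K_def)
qed

lemma uval_bound: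
  assumes P: "priors_ok P" and s: "stat_experiment M \<sigma>" and t: "strategy M \<tau>"
  shows "\<bar>uval P u M \<sigma> \<tau>\<bar> \<le> K u" and "bdd_below ((\<lambda>p. eu u M p \<sigma> \<tau>) ` P)"
proof -
  have ne: "P \<noteq> {}" and pd: "\<And>p. p \<in> P \<Longrightarrow> dist_on UNIV p" using P by (auto simp: priors_ok_def)
  have b: "\<And>p. p \<in> P \<Longrightarrow> \<bar>eu u M p \<sigma> \<tau>\<bar> \<le> K u" using eu_bound[OF pd s t] by blast
  show bb: "bdd_below ((\<lambda>p. eu u M p \<sigma> \<tau>) ` P)"
    by (rule bdd_belowI2[where m="- K u"]) (use b in force)
  obtain p0 where p0: "p0 \<in> P" using ne by auto
  have "uval P u M \<sigma> \<tau> \<le> eu u M p0 \<sigma> \<tau>" unfolding uval_def by (rule cINF_lower[OF bb p0])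
  moreover have "- K u \<le> uval P u M \<sigma> \<tau>" unfolding uval_def
    by (rule cINF_greatest[OF ne]) (use b in force)
  ultimately show "\<bar>uval P u M \<sigma> \<tau>\<bar> \<le> K u" using b[OF p0] by linarith
qed

lemma Uval_bound:
  assumes P: "priors_ok P" and S: "\<Sigma> \<noteq> {}" "\<And>\<sigma>. \<sigma> \<in> \<Sigma> \<Longrightarrow> stat_experiment M \<sigma>" and t: "strategy M \<tau>"
  shows "\<bar>Uval P u M \<Sigma> \<tau>\<bar> \<le> K u" and "bdd_below ((\<lambda>\<sigma>. uval P u M \<sigma> \<tau>) ` \<Sigma>)"
proof -
  have b: "\<And>\<sigma>. \<sigma> \<in> \<Sigma> \<Longrightarrow> \<bar>uval P u M \<sigma> \<tau>\<bar> \<le> K u" using uval_bound(1)[OF P S(2) t] by blast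
  show bb: "bdd_below ((\<lambda>\<sigma>. uval P u M \<sigma> \<tau>) ` \<Sigma>)"
    by (rule bdd_belowI2[where m="- K u"]) (use b in force)
  obtain p0 where p0: "p0 \<in> \<Sigma>" using S by auto
  have "Uval P u M \<Sigma> \<tau> \<le> uval P u M p0 \<tau>" unfolding Uval_def by (rule cINF_lower[OF bb p0])
  moreover have "- K u \<le> Uval P u M \<Sigma> \<tau>" unfolding Uval_def
    by (rule cINF_greatest[OF S(1)]) (use b in force)
  ultimately show "\<bar>Uval P u M \<Sigma> \<tau>\<bar> \<le> K u" using b[OF p0] by linarith
qed




lemma garb_stat:
  assumes s: "stat_experiment M \<sigma>" and t: "strategy M \<tau>"
  shows "stat_experiment (UNIV::'a::finite set) (garb M \<tau> \<sigma>)"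
proof -
  have fM: "finite M" and sd: "\<And>w. dist_on M (\<sigma> w)" using s by (auto simp: stat_experiment_def)
  have td: "\<And>m. m \<in> M \<Longrightarrow> dist_on UNIV (\<tau> m)" using t by (simp add: strategy_def)
  show ?thesis unfolding stat_experiment_def dist_on_def
  proof (intro conjI allI ballI)
    fix w and a :: 'a
    show "0 \<le> garb M \<tau> \<sigma> w a" unfolding garb_def
      by (intro sum_nonneg mult_nonneg_nonneg) (use dist_ge0[OF sd] dist_ge0[OF td] in auto)
    have "(\<Sum>a\<in>UNIV. garb M \<tau> \<sigma> w a) = (\<Sum>m\<in>M. \<sigma> w m * (\<Sum>a\<in>UNIV. \<tau> m a))"
      unfolding garb_def by (subst sum.swap) (simp add: sum_distrib_left)
    also have "\<dots> = (\<Sum>m\<in>M. \<sigma> w m)" using td by (intro sum.cong) (auto simp: dist_on_def)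
    also have "\<dots> = 1" using sd by (simp add: dist_on_def)
    finally show "(\<Sum>a\<in>UNIV. garb M \<tau> \<sigma> w a) = 1" .
  qed auto
qed

lemma cmpz_strategy:
  assumes t: "strategy M \<tau>" and t': "strategy (UNIV::'a::finite set) \<tau>'"
  shows "strategy M (cmpz (\<tau>::_ \<Rightarrow> 'a \<Rightarrow> real) (\<tau>'::'a \<Rightarrow> 'b::finite \<Rightarrow> real))"
  unfolding strategy_def
proof
  fix m assume m: "m \<in> M"
  have td: "dist_on UNIV (\<tau> m)" using t m by (simp add: strategy_def)
  have td': "\<And>a. dist_on UNIV (\<tau>' a)" using t' by (simp add: strategy_def)
  show "dist_on UNIV (cmpz \<tau> \<tau>' m)" unfolding dist_on_def
  proof (intro conjI allI ballI impI)
    fix b show "0 \<le> cmpz \<tau> \<tau>' m b" unfolding cmpz_def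
      by (intro sum_nonneg mult_nonneg_nonneg) (use dist_ge0[OF td] dist_ge0[OF td'] in auto)
    have "sum (cmpz \<tau> \<tau>' m) UNIV = (\<Sum>a\<in>UNIV. \<tau> m a * (\<Sum>b\<in>UNIV. \<tau>' a b))"
      unfolding cmpz_def by (subst sum.swap) (simp add: sum_distrib_left)
    also have "\<dots> = 1" using td td' by (simp add: dist_on_def)
    finally show "sum (cmpz \<tau> \<tau>' m) UNIV = 1" .
  qed auto
qed

lemma obedient_strategy: "strategy (UNIV::'a::finite set) (obedient::'a \<Rightarrow> 'a \<Rightarrow> real)"
  unfolding strategy_def dist_on_def obedient_def by simp

lemma garb_convex:
  assumes "convex_set2 \<Sigma>"
  shows "convex_set2 (garb M \<tau> ` \<Sigma>)"
  unfolding convex_set2_def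
proof (intro ballI allI impI)
  fix x y and t :: real assume "x \<in> garb M \<tau> ` \<Sigma>" "y \<in> garb M \<tau> ` \<Sigma>" and t: "0 \<le> t \<and> t \<le> 1"
  then obtain x0 y0 where x0: "x0 \<in> \<Sigma>" "x = garb M \<tau> x0" and y0: "y0 \<in> \<Sigma>" "y = garb M \<tau> y0" by auto
  have mem: "(\<lambda>w m. t * x0 w m + (1 - t) * y0 w m) \<in> \<Sigma>" using assms x0 y0 t by (auto simp: convex_set2_def)
  have eq: "garb M \<tau> (\<lambda>w m. t * x0 w m + (1 - t) * y0 w m) = (\<lambda>w m. t * x w m + (1 - t) * y w m)"
  proof (intro ext)
    fix w a
    have "(\<Sum>m\<in>M. (t * x0 w m + (1 - t) * y0 w m) * \<tau> m a) = (\<Sum>m\<in>M. t * (x0 w m * \<tau> m a) + (1 - t) * (y0 w m * \<tau> m a))"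
      by (rule sum.cong[OF refl]) (simp add: algebra_simps)
    also have "\<dots> = t * (\<Sum>m\<in>M. x0 w m * \<tau> m a) + (1 - t) * (\<Sum>m\<in>M. y0 w m * \<tau> m a)"
      by (simp add: sum.distrib sum_distrib_left)
    finally show "garb M \<tau> (\<lambda>w m. t * x0 w m + (1 - t) * y0 w m) w a = t * x w a + (1 - t) * y w a"
      by (simp add: x0(2) y0(2) garb_def)
  qed
  show "(\<lambda>w m. t * x w m + (1 - t) * y w m) \<in> garb M \<tau> ` \<Sigma>" using image_eqI[where f="garb M \<tau>", OF eq[symmetric] mem] .
qed

lemma box_compact: "compact {\<sigma>::'w::finite \<Rightarrow> nat \<Rightarrow> real. \<forall>w m. \<sigma> w m \<in> {0..1}}"
proof -
  have c1: "compact (Pi\<^sub>E (UNIV::nat set) (\<lambda>m. {0..1::real}))"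
    using compactin_PiE[of "\<lambda>i. euclidean" UNIV "\<lambda>m. {0..1::real}"]
    by (simp add: euclidean_product_topology)
  have c2: "compact (Pi\<^sub>E (UNIV::'w set) (\<lambda>w. Pi\<^sub>E (UNIV::nat set) (\<lambda>m. {0..1::real})))"
    using compactin_PiE[of "\<lambda>i. euclidean" UNIV "\<lambda>w. Pi\<^sub>E (UNIV::nat set) (\<lambda>m. {0..1::real})"] c1
    by (simp add: euclidean_product_topology)
  have "{\<sigma>::'w::finite \<Rightarrow> nat \<Rightarrow> real. \<forall>w m. \<sigma> w m \<in> {0..1}} = Pi\<^sub>E (UNIV::'w set) (\<lambda>w. Pi\<^sub>E (UNIV::nat set) (\<lambda>m. {0..1::real}))"
    by (auto simp: PiE_iff)
  with c2 show ?thesis by simp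
qed

lemma garb_closed:
  fixes \<Sigma> :: "('w::finite \<Rightarrow> nat \<Rightarrow> real) set" and \<tau> :: "nat \<Rightarrow> 'a::finite \<Rightarrow> real"
  assumes A: "amb_experiment M \<Sigma>"
  shows "closed (garb M \<tau> ` \<Sigma>)"
proof -
  have cl: "closed \<Sigma>" using A by (simp add: amb_experiment_def)
  have sub: "\<Sigma> \<subseteq> {\<sigma>::'w::finite \<Rightarrow> nat \<Rightarrow> real. \<forall>w m. \<sigma> w m \<in> {0..1}}"
  proof
    fix \<sigma> assume "\<sigma> \<in> \<Sigma>"
    then have s: "stat_experiment M \<sigma>" using A by (simp add: amb_experiment_def)
    then have fM: "finite M" and d: "\<And>w. dist_on M (\<sigma> w)" by (auto simp: stat_experiment_def)
    have "\<sigma> w m \<in> {0..1}" for w m using dist_ge0[OF d] dist_le1[OF d fM] by simp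
    then show "\<sigma> \<in> {\<sigma>. \<forall>w m. \<sigma> w m \<in> {0..1}}" by simp
  qed
  have cS: "compact \<Sigma>"
    using compact_Int_closed[OF box_compact cl] sub by (simp add: Int_absorb1)
  moreover have co: "continuous_on \<Sigma> (garb M \<tau>)" unfolding garb_def
  proof (rule continuous_on_coordinatewise_then_product, rule continuous_on_coordinatewise_then_product,
      rule continuous_on_sum, rule continuous_on_mult, goal_cases)
    case (2 w a m)
    show ?case by (rule continuous_on_const)
  next
    case (1 w a m)
    have "continuous_on UNIV (\<lambda>\<sigma>::'w \<Rightarrow> nat \<Rightarrow> real. \<sigma> w m)"
    proof -
      have c1: "continuous_on UNIV (\<lambda>\<sigma>::'w \<Rightarrow> nat \<Rightarrow> real. \<sigma> w)" by simp
      have c2: "continuous_on UNIV (\<lambda>f::nat \<Rightarrow> real. f m)" by simp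
      have "continuous_on UNIV ((\<lambda>f::nat \<Rightarrow> real. f m) \<circ> (\<lambda>\<sigma>::'w \<Rightarrow> nat \<Rightarrow> real. \<sigma> w))"
        by (rule continuous_on_compose[OF c1 continuous_on_subset[OF c2]]) simp
      then show ?thesis by (simp add: o_def)
    qed
    then show ?case by (rule continuous_on_subset) simp
  qed
  have "compact (garb M \<tau> ` \<Sigma>)" by (rule compact_continuous_image[OF co cS])
  then show ?thesis by (rule compact_imp_closed)
qed

lemma uval_garb:
  "uval P u (UNIV::'a::finite set) (garb M \<tau> \<sigma>) \<tau>' = uval P u M \<sigma> (cmpz \<tau> \<tau>')"
  unfolding uval_def eu_garb ..

lemma Uval_garb:
  "Uval P u (UNIV::'a::finite set) (garb M \<tau> ` \<Sigma>) \<tau>' = Uval P u M \<Sigma> (cmpz \<tau> \<tau>')"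
  unfolding Uval_def image_image uval_garb ..




lemma transfer:
  fixes \<sigma>' :: "'w::finite \<Rightarrow> 'a::finite \<Rightarrow> real"
  assumes s: "stat_experiment UNIV \<sigma>'" and br: "obedient \<in> BR_stat P ur UNIV \<sigma>'"
  shows "\<exists>(M::nat set) \<sigma> \<tau>. uval P us UNIV \<sigma>' obedient = uval P us M \<sigma> \<tau> \<and>
            finite M \<and> stat_experiment M \<sigma> \<and> \<tau> \<in> BR_stat P ur M \<sigma>"
proof -
  define N where "N = {0..<card (UNIV::'a set)}"
  obtain h where h: "bij_betw h (UNIV::'a set) N"
    unfolding N_def using ex_bij_betw_finite_nat[of "UNIV::'a set"] by auto
  define g where "g = inv_into (UNIV::'a set) h"
  have gh: "\<And>a. g (h a) = a" unfolding g_def using h by (simp add: bij_betw_def inv_into_f_f)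
  have hN: "\<And>a. h a \<in> N" by (rule bij_betw_apply[OF h]) simp
  have fN: "finite N" unfolding N_def by simp
  define \<sigma>n where "\<sigma>n = (\<lambda>w n. if n \<in> N then \<sigma>' w (g n) else 0)"
  define \<tau>n where "\<tau>n = (\<lambda>n. obedient (g n) :: 'a \<Rightarrow> real)"
  have sh: "\<And>w a. \<sigma>n w (h a) = \<sigma>' w a" unfolding \<sigma>n_def using hN gh by simp
  have reidx: "\<And>F::nat \<Rightarrow> real. sum F N = (\<Sum>a\<in>UNIV. F (h a))"
    by (rule sum.reindex_bij_betw[OF h, symmetric])
  have eueq: "eu u N p \<sigma>n \<tau>'' = eu u UNIV p \<sigma>' (\<lambda>a. \<tau>'' (h a))" for u :: "'b::finite \<Rightarrow> 'w \<Rightarrow> real" and p \<tau>''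
    unfolding eu_def by (subst reidx) (simp add: sh)
  have uveq: "uval P u N \<sigma>n \<tau>'' = uval P u UNIV \<sigma>' (\<lambda>a. \<tau>'' (h a))" for u :: "'b::finite \<Rightarrow> 'w \<Rightarrow> real" and \<tau>''
    unfolding uval_def eueq ..
  have tnh: "(\<lambda>a. \<tau>n (h a)) = obedient" unfolding \<tau>n_def using gh by simp
  have sd: "\<And>w. dist_on UNIV (\<sigma>' w)" using s by (simp add: stat_experiment_def)
  have sn: "stat_experiment N \<sigma>n" unfolding stat_experiment_def
  proof (intro conjI allI fN)
    fix w
    show "dist_on N (\<sigma>n w)" unfolding dist_on_def
    proof (intro conjI ballI allI impI)
      fix n assume "n \<in> N" then show "0 \<le> \<sigma>n w n" unfolding \<sigma>n_def using dist_ge0[OF sd] by simp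
    next
      fix n assume "n \<notin> N" then show "\<sigma>n w n = 0" unfolding \<sigma>n_def by simp
    next
      show "sum (\<sigma>n w) N = 1" using sd by (subst reidx) (simp add: sh dist_on_def)
    qed
  qed
  have tn: "strategy N \<tau>n" using obedient_strategy unfolding strategy_def \<tau>n_def by blast
  have strh: "strategy UNIV (\<lambda>a. \<tau>'' (h a))" if "strategy N \<tau>''" for \<tau>'' :: "nat \<Rightarrow> 'a \<Rightarrow> real"
    using that hN unfolding strategy_def by simp
  have brn: "\<tau>n \<in> BR_stat P ur N \<sigma>n"
    unfolding BR_stat_def
  proof (intro CollectI conjI tn allI impI)
    fix \<tau>'' :: "nat \<Rightarrow> 'a \<Rightarrow> real" assume "strategy N \<tau>''"
    then have "uval P ur UNIV \<sigma>' (\<lambda>a. \<tau>'' (h a)) \<le> uval P ur UNIV \<sigma>' obedient"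
      using br strh unfolding BR_stat_def by blast
    then show "uval P ur N \<sigma>n \<tau>'' \<le> uval P ur N \<sigma>n \<tau>n" by (simp add: uveq tnh)
  qed
  have "uval P us UNIV \<sigma>' obedient = uval P us N \<sigma>n \<tau>n" by (simp add: uveq tnh)
  then show ?thesis using fN sn brn by blast
qed




lemma singleton_amb:
  fixes \<sigma> :: "'w::finite \<Rightarrow> nat \<Rightarrow> real"
  assumes "stat_experiment M \<sigma>"
  shows "amb_experiment M {\<sigma>}"
  unfolding amb_experiment_def convex_set2_def using assms
  by (auto simp: algebra_simps)

lemma Uval_single: "Uval P u M {\<sigma>} \<tau> = uval P u M \<sigma> \<tau>"
  unfolding Uval_def by simp

lemma BR_single: "BR_amb P u M {\<sigma>} = BR_stat P u M \<sigma>"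
  unfolding BR_amb_def BR_stat_def Uval_single ..

theorem lemma2:
  fixes P :: "('w::finite \<Rightarrow> real) set"
    and us ur :: "'a::finite \<Rightarrow> 'w \<Rightarrow> real"
  assumes "priors_ok P"
    and "V_amb P us ur > V_stat P us ur"
  shows "\<exists>\<Sigma> :: ('w \<Rightarrow> 'a \<Rightarrow> real) set.
           amb_experiment (UNIV :: 'a set) \<Sigma> \<and>
           obedient \<in> BR_amb P ur (UNIV :: 'a set) \<Sigma> \<and>
           (\<forall>\<sigma>\<in>\<Sigma>. obedient \<notin> BR_stat P ur (UNIV :: 'a set) \<sigma>)"
proof -
  note P = assms(1)
  define SS where "SS = {uval P us M \<sigma> \<tau> | (M::nat set) \<sigma> \<tau>.
      finite M \<and> stat_experiment M \<sigma> \<and> \<tau> \<in> BR_stat P ur M \<sigma>}"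
  define SA where "SA = {Uval P us M \<Sigma> \<tau> | (M::nat set) \<Sigma> \<tau>.
      finite M \<and> amb_experiment M \<Sigma> \<and> \<tau> \<in> BR_amb P ur M \<Sigma>}"
  have VS: "V_stat P us ur = Sup SS" unfolding SS_def V_stat_def ..
  have VA: "V_amb P us ur = Sup SA" unfolding SA_def V_amb_def ..
  have SSsub: "SS \<subseteq> SA"
  proof
    fix x assume "x \<in> SS"
    then obtain M :: "nat set" and \<sigma> \<tau> where x: "x = uval P us M \<sigma> \<tau>" "finite M" "stat_experiment M \<sigma>" "\<tau> \<in> BR_stat P ur M \<sigma>"
      unfolding SS_def by blast
    have "x = Uval P us M {\<sigma>} \<tau>" using x(1) by (simp add: Uval_single)
    moreover have "amb_experiment M {\<sigma>}" by (rule singleton_amb[OF x(3)])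
    moreover have "\<tau> \<in> BR_amb P ur M {\<sigma>}" using x(4) by (simp add: BR_single)
    ultimately show "x \<in> SA" unfolding SA_def using x(2) by blast
  qed
  have SSb: "bdd_above SS"
  proof (rule bdd_aboveI[where M="K us"])
    fix x assume "x \<in> SS"
    then obtain M :: "nat set" and \<sigma> \<tau> where x: "x = uval P us M \<sigma> \<tau>" "stat_experiment M \<sigma>" "\<tau> \<in> BR_stat P ur M \<sigma>"
      unfolding SS_def by blast
    have "strategy M \<tau>" using x(3) by (simp add: BR_stat_def)
    then have "\<bar>uval P us M \<sigma> \<tau>\<bar> \<le> K us" by (rule uval_bound(1)[OF P x(2)])
    then show "x \<le> K us" using x(1) by linarith
  qed
  have SAb: "bdd_above SA"
  proof (rule bdd_aboveI[where M="K us"])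
    fix x assume "x \<in> SA"
    then obtain M :: "nat set" and \<Sigma> \<tau> where x: "x = Uval P us M \<Sigma> \<tau>" "amb_experiment M \<Sigma>" "\<tau> \<in> BR_amb P ur M \<Sigma>"
      unfolding SA_def by blast
    have "strategy M \<tau>" using x(3) by (simp add: BR_amb_def)
    moreover have "\<Sigma> \<noteq> {}" "\<And>\<sigma>. \<sigma> \<in> \<Sigma> \<Longrightarrow> stat_experiment M \<sigma>" using x(2) by (auto simp: amb_experiment_def)
    ultimately have "\<bar>Uval P us M \<Sigma> \<tau>\<bar> \<le> K us" using Uval_bound(1)[OF P] by blast
    then show "x \<le> K us" using x(1) by linarith
  qed
  have SAne: "SA \<noteq> {}"
  proof
    assume "SA = {}"
    then have "SS = {}" using SSsub by blast
    then show False using assms(2) VS VA \<open>SA = {}\<close> by simp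
  qed
  obtain x where xSA: "x \<in> SA" and xgt: "V_stat P us ur < x"
    using assms(2) VA less_cSup_iff[OF SAne SAb] by auto
  then obtain M :: "nat set" and \<Sigma> \<tau> where x: "x = Uval P us M \<Sigma> \<tau>" "finite M" "amb_experiment M \<Sigma>" "\<tau> \<in> BR_amb P ur M \<Sigma>"
    unfolding SA_def by blast
  have tM: "strategy M \<tau>" using x(4) by (simp add: BR_amb_def)
  have Sne: "\<Sigma> \<noteq> {}" and Sst: "\<And>\<sigma>. \<sigma> \<in> \<Sigma> \<Longrightarrow> stat_experiment M \<sigma>" and Scv: "convex_set2 \<Sigma>"
    using x(3) by (auto simp: amb_experiment_def)
  define \<Sigma>' where "\<Sigma>' = (garb M \<tau> ` \<Sigma> :: ('w \<Rightarrow> 'a \<Rightarrow> real) set)"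
  have amb': "amb_experiment (UNIV::'a set) \<Sigma>'"
    unfolding amb_experiment_def \<Sigma>'_def
    using Sne garb_closed[OF x(3)] garb_convex[OF Scv] garb_stat[OF Sst tM] by blast
  have ob: "obedient \<in> BR_amb P ur (UNIV::'a set) \<Sigma>'"
    unfolding BR_amb_def
  proof (intro CollectI conjI obedient_strategy allI impI)
    fix \<tau>' :: "'a \<Rightarrow> 'a \<Rightarrow> real" assume "strategy UNIV \<tau>'"
    then have "strategy M (cmpz \<tau> \<tau>')" by (rule cmpz_strategy[OF tM])
    then have "Uval P ur M \<Sigma> (cmpz \<tau> \<tau>') \<le> Uval P ur M \<Sigma> \<tau>" using x(4) by (simp add: BR_amb_def)
    then show "Uval P ur UNIV \<Sigma>' \<tau>' \<le> Uval P ur UNIV \<Sigma>' obedient"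
      unfolding \<Sigma>'_def Uval_garb cmpz_obedient .
  qed
  have nob: "\<forall>\<sigma>\<in>\<Sigma>'. obedient \<notin> BR_stat P ur (UNIV :: 'a set) \<sigma>"
  proof (intro ballI notI)
    fix \<sigma>' assume s': "\<sigma>' \<in> \<Sigma>'" and br: "obedient \<in> BR_stat P ur (UNIV :: 'a set) \<sigma>'"
    have ss': "stat_experiment UNIV \<sigma>'" using amb' s' by (simp add: amb_experiment_def)
    obtain M2 \<sigma>2 \<tau>2 where t: "uval P us UNIV \<sigma>' obedient = uval P us (M2::nat set) \<sigma>2 \<tau>2"
        "finite M2" "stat_experiment M2 \<sigma>2" "\<tau>2 \<in> BR_stat P ur M2 \<sigma>2"
      using transfer[OF ss' br, of us] by blast
    have "uval P us UNIV \<sigma>' obedient \<in> SS" unfolding SS_def using t by blast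
    then have le1: "uval P us UNIV \<sigma>' obedient \<le> V_stat P us ur" unfolding VS by (rule cSup_upper[OF _ SSb])
    have ne': "\<Sigma>' \<noteq> {}" and st': "\<And>\<sigma>. \<sigma> \<in> \<Sigma>' \<Longrightarrow> stat_experiment UNIV \<sigma>" using amb' by (auto simp: amb_experiment_def)
    have bb: "bdd_below ((\<lambda>\<sigma>. uval P us UNIV \<sigma> obedient) ` \<Sigma>')"
      by (rule Uval_bound(2)[OF P ne' st' obedient_strategy])
    have "Uval P us UNIV \<Sigma>' obedient \<le> uval P us UNIV \<sigma>' obedient"
      unfolding Uval_def by (rule cINF_lower[OF bb s'])
    moreover have "Uval P us UNIV \<Sigma>' obedient = x"
      unfolding \<Sigma>'_def Uval_garb cmpz_obedient x(1) ..
    ultimately show False using le1 xgt by linarith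
  qed
  show ?thesis using amb' ob nob by blast
qed


end
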